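(* Let $n\ge 1$ and let $r$ be an integer with $(n+1)/2 < r \le n$. Let $\theta=(\theta_1,\dots,\theta_n)\in\mathbb{R}^n$ and let $T_1,\dots,T_n$ be independent random variables with $T_i\sim N(\theta_i,1)$. Let $\Phi$ be the standard normal cumulative distribution function, and set $p_i = 1-\Phi(T_i)$ and $q_i=\Phi(T_i)=1-p_i$ for $i=1,\dots,n$. Let $p_{(1)}\le\dots\le p_{(n)}$ and $q_{(1)}\le\dots\le q_{(n)}$ denote the order statistics, and define the Bonferroni partial conjunction $p$-values $$p^+_{r/n}=(n-r+1)\,p_{(r)},\qquad p^-_{r/n}=(n-r+1)\,q_{(r)}.$$ Let $n^+=|\{i:\theta_i>0\}|$, $n^-=|\{i:\theta_i<0\}|$, and let $H_{r/n}$ be the null hypothesis $n^+<r$ and $n^-<r$. Then $p_{r/n}=\min\{p^+_{r/n},p^-_{r/n}\}$ is a valid $p$-value for $H_{r/n}$: for every $\alpha\in(0,1/2)$ and every $\theta\in\mathbb{R}^n$ with $n^+<r$ and $n^-<r$, $$\Pr_\theta\big(\min\{p^+_{r/n},p^-_{r/n}\}\le\alpha\big)\le\alpha.$$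
   Context: $H_{r/n}$ is the "$r$ out of $n$ directional replicability" null hypothesis: fewer than $r$ of the effects $\theta_i$ are positive and fewer than $r$ are negative. $p_i$ is the one-sided $p$-value for $\theta_i\le 0$ and $q_i$ the one-sided $p$-value for $\theta_i\ge 0$. *)

theory Defs
  imports "HOL-Probability.Probability"
begin

definition Phi :: "real \<Rightarrow> real" where
  "Phi x = measure (density lborel std_normal_density) {..x}"

(* k-th order statistic (1-indexed) of the values f 0, ..., f (n-1):
   ord_stat n f k = f_(k), where f_(1) <= ... <= f_(n) *)
definition ord_stat :: "nat \<Rightarrow> (nat \<Rightarrow> real) \<Rightarrow> nat \<Rightarrow> real" where
  "ord_stat n f k = sort (map f [0..<n]) ! (k - 1)"

definition T_law :: "nat \<Rightarrow> (nat \<Rightarrow> real) \<Rightarrow> (nat \<Rightarrow> real) measure" where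
  "T_law n \<theta> = PiM {..<n} (\<lambda>i. density lborel (normal_density (\<theta> i) 1))"

definition pval :: "(nat \<Rightarrow> real) \<Rightarrow> nat \<Rightarrow> real" where
  "pval T i = 1 - Phi (T i)"

definition qval :: "(nat \<Rightarrow> real) \<Rightarrow> nat \<Rightarrow> real" where
  "qval T i = Phi (T i)"

definition p_plus :: "nat \<Rightarrow> nat \<Rightarrow> (nat \<Rightarrow> real) \<Rightarrow> real" where
  "p_plus n r T = real (n - r + 1) * ord_stat n (pval T) r"

definition p_minus :: "nat \<Rightarrow> nat \<Rightarrow> (nat \<Rightarrow> real) \<Rightarrow> real" where
  "p_minus n r T = real (n - r + 1) * ord_stat n (qval T) r"

end

theory Submission
  imports Defs
begin


fun pb :: "(nat \<Rightarrow> real) \<Rightarrow> nat \<Rightarrow> nat \<Rightarrow> real" where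
  "pb a 0 k = (if k = 0 then 1 else 0)"
| "pb a (Suc n) k = (if k = 0 then 1 else a n * pb a n (k - 1) + (1 - a n) * pb a n k)"

lemma pb_k0[simp]: "pb a n 0 = 1"
  by (cases n) auto

lemma pb_cong: "(\<And>i. i < n \<Longrightarrow> a i = a' i) \<Longrightarrow> pb a n k = pb a' n k"
  by (induction n arbitrary: k) auto

definition p01 :: "(nat \<Rightarrow> real) \<Rightarrow> nat \<Rightarrow> bool" where
  "p01 a n = (\<forall>i<n. 0 \<le> a i \<and> a i \<le> 1)"

lemma pb_bounds: "p01 a n \<Longrightarrow> 0 \<le> pb a n k \<and> pb a n k \<le> 1"
proof (induction n arbitrary: k)
  case 0 then show ?case by auto
next
  case (Suc n)
  have p: "p01 a n" and an: "0 \<le> a n" "a n \<le> 1" using Suc.prems by (auto simp: p01_def)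
  have i1: "0 \<le> pb a n (k-1)" "pb a n (k-1) \<le> 1" and i2: "0 \<le> pb a n k" "pb a n k \<le> 1"
    using Suc.IH[OF p] by auto
  have "a n * pb a n (k - 1) + (1 - a n) * pb a n k \<le> a n * 1 + (1 - a n) * 1"
    by (intro add_mono mult_left_mono) (use i1 i2 an in auto)
  moreover have "0 \<le> a n * pb a n (k - 1) + (1 - a n) * pb a n k"
    using i1 i2 an by auto
  ultimately show ?case by auto
qed

lemma pb_mono_k: "p01 a n \<Longrightarrow> pb a n (Suc k) \<le> pb a n k"
proof (induction n arbitrary: k)
  case 0 then show ?case by auto
next
  case (Suc n)
  have p: "p01 a n" and an: "0 \<le> a n" "a n \<le> 1" using Suc.prems by (auto simp: p01_def)
  show ?case
  proof (cases k)
    case 0 then show ?thesis using pb_bounds[OF Suc.prems, of "Suc 0"] by simp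
  next
    case (Suc m)
    have "pb a n (Suc m) \<le> pb a n m" "pb a n (Suc (Suc m)) \<le> pb a n (Suc m)" using Suc.IH[OF p] by auto
    then have "a n * pb a n (Suc m) + (1 - a n) * pb a n (Suc (Suc m)) \<le> a n * pb a n m + (1 - a n) * pb a n (Suc m)"
      by (intro add_mono mult_left_mono) (use an in auto)
    then show ?thesis using Suc by simp
  qed
qed

lemma pb_mono_k': assumes "p01 a n" "k \<le> k'" shows "pb a n k' \<le> pb a n k"
  using assms(2)
proof (induction k' rule: dec_induct)
  case base then show ?case by simp
next
  case (step m) then show ?case using pb_mono_k[OF assms(1), of m] by simp
qed

lemma pb_big: "n < k \<Longrightarrow> pb a n k = 0"
  by (induction n arbitrary: k) auto

lemma pb_affine: "i < n \<Longrightarrow> pb (a(i:=x)) n k = (1 - x) * pb (a(i:=0)) n k + x * pb (a(i:=1)) n k"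
proof (induction n arbitrary: k)
  case 0 then show ?case by simp
next
  case (Suc n)
  show ?case
  proof (cases "i = n")
    case True
    have e: "\<And>y j. pb (a(n:=y)) n j = pb a n j" by (rule pb_cong) auto
    have f: "\<And>y. pb (a(n:=y)) (Suc n) k = (if k = 0 then 1 else y * pb a n (k-1) + (1-y) * pb a n k)"
      by (simp only: pb.simps e) simp
    show ?thesis using True by (simp only: f) (simp add: algebra_simps)
  next
    case False
    then have i: "i < n" using Suc.prems by simp
    have ih1: "pb (a(i:=x)) n k = (1 - x) * pb (a(i:=0)) n k + x * pb (a(i:=1)) n k"
      and ih2: "pb (a(i:=x)) n (k-1) = (1 - x) * pb (a(i:=0)) n (k-1) + x * pb (a(i:=1)) n (k-1)"
      using Suc.IH[OF i] by (simp_all add: fun_upd_def)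
    have g: "\<And>y. pb (a(i:=y)) (Suc n) k = (if k = 0 then 1 else a n * pb (a(i:=y)) n (k-1) + (1 - a n) * pb (a(i:=y)) n k)"
      using False by simp
    show ?thesis unfolding g ih1 ih2 by (simp add: algebra_simps)
  qed
qed

lemma p01_upd: "p01 a n \<Longrightarrow> 0 \<le> x \<Longrightarrow> x \<le> 1 \<Longrightarrow> p01 (a(i:=x)) n"
  by (auto simp: p01_def)

lemma pb_mono_coord: "p01 a n \<Longrightarrow> i < n \<Longrightarrow> pb (a(i:=0)) n k \<le> pb (a(i:=1)) n k"
proof (induction n arbitrary: k)
  case 0 then show ?case by simp
next
  case (Suc n)
  have p: "p01 a n" and an: "0 \<le> a n" "a n \<le> 1" using Suc.prems by (auto simp: p01_def)
  show ?case
  proof (cases "i = n")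
    case True
    have e: "\<And>y j. pb (a(n:=y)) n j = pb a n j" by (rule pb_cong) auto
    have f: "\<And>y. pb (a(n:=y)) (Suc n) k = (if k = 0 then 1 else y * pb a n (k-1) + (1-y) * pb a n k)"
      by (simp only: pb.simps e) simp
    show ?thesis using True pb_mono_k[OF p, of "k-1"] by (simp only: f) (cases k, auto)
  next
    case False
    then have i: "i < n" using Suc.prems by simp
    have "pb (a(i:=0)) n (k-1) \<le> pb (a(i:=1)) n (k-1)" "pb (a(i:=0)) n k \<le> pb (a(i:=1)) n k"
      using Suc.IH[OF p i] by (simp_all add: fun_upd_def)
    then have "a n * pb (a(i:=0)) n (k-1) + (1 - a n) * pb (a(i:=0)) n k
       \<le> a n * pb (a(i:=1)) n (k-1) + (1 - a n) * pb (a(i:=1)) n k"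
      by (intro add_mono mult_left_mono) (use an in auto)
    moreover have g: "\<And>y. pb (a(i:=y)) (Suc n) k = (if k = 0 then 1 else a n * pb (a(i:=y)) n (k-1) + (1 - a n) * pb (a(i:=y)) n k)"
      using False by simp
    ultimately show ?thesis unfolding g by simp
  qed
qed



abbreviation T :: "real \<Rightarrow> nat \<Rightarrow> nat \<Rightarrow> real" where
  "T c N k \<equiv> pb (\<lambda>_. c) N k"

lemma p01_const: "0 \<le> c \<Longrightarrow> c \<le> 1 \<Longrightarrow> p01 (\<lambda>_. c) N"
  by (auto simp: p01_def)

lemma T_Suc: "k > 0 \<Longrightarrow> T c (Suc N) k = c * T c N (k-1) + (1 - c) * T c N k"
  by simp

lemma set_Suc: "{i. i < Suc n \<and> P i} = (if P n then insert n {i. i<n \<and> P i} else {i. i<n \<and> P i})"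
  by (auto simp: less_Suc_eq)

lemma ext_eval:
  assumes "c \<noteq> 0" "c \<noteq> 1" "\<forall>i<n. a i = 0 \<or> a i = 1 \<or> a i = c"
  shows "pb a n k = T c (card {i. i<n \<and> a i = c}) (k - card {i. i<n \<and> a i = 1})"
  using assms(3)
proof (induction n arbitrary: k)
  case 0 then show ?case by simp
next
  case (Suc n)
  have IH: "\<And>k. pb a n k = T c (card {i. i<n \<and> a i = c}) (k - card {i. i<n \<and> a i = 1})"
    using Suc.IH Suc.prems by simp
  let ?C = "{i. i<n \<and> a i = c}" and ?O = "{i. i<n \<and> a i = 1}"
  have fC: "finite ?C" "finite ?O" by auto
  have an: "a n = 0 \<or> a n = 1 \<or> a n = c" using Suc.prems by auto
  show ?case
  proof (cases "k = 0")
    case True then show ?thesis by simp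
  next
    case k: False
    consider "a n = 0" | "a n = 1" | "a n = c" using an by blast
    then show ?thesis
    proof cases
      case 1
      have "{i. i<Suc n \<and> a i = c} = ?C" "{i. i<Suc n \<and> a i = 1} = ?O"
        using 1 assms(1,2) by (simp_all only: set_Suc) (use assms(1,2) in simp_all)
      then show ?thesis using k 1 IH by simp
    next
      case 2
      have e1: "{i. i<Suc n \<and> a i = c} = ?C" "{i. i<Suc n \<and> a i = 1} = insert n ?O"
        using 2 assms(1,2) by (simp_all only: set_Suc) (use assms(1,2) in simp_all)
      have "card (insert n ?O) = Suc (card ?O)" using fC by simp
      moreover have "k - Suc (card ?O) = k - 1 - card ?O" by simp
      ultimately show ?thesis using k 2 IH e1 by simp
    next
      case 3
      have e1: "{i. i<Suc n \<and> a i = c} = insert n ?C" "{i. i<Suc n \<and> a i = 1} = ?O"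
        using 3 assms(1,2) by (simp_all only: set_Suc) (use assms(1,2) in simp_all)
      have cc: "card (insert n ?C) = Suc (card ?C)" using fC by simp
      show ?thesis
      proof (cases "k \<le> card ?O")
        case True
        then show ?thesis using k 3 IH e1 cc by simp
      next
        case False
        then have "k - card ?O = Suc (k - 1 - card ?O)" using k by simp
        then show ?thesis using k 3 IH e1 cc by simp
      qed
    qed
  qed
qed

lemma T_II:
  assumes c: "0 \<le> c" "c \<le> 1"
  shows "1 \<le> K \<Longrightarrow> K \<le> N + 1 \<Longrightarrow> T c (Suc N) K \<le> real (N + 2 - K) * c * T c N (K - 1)"
proof (induction N arbitrary: K)
  case 0 then have "K = 1" by simp
  then show ?case by simp
next
  case (Suc N)
  have b: "\<And>N k. 0 \<le> T c N k" using pb_bounds[OF p01_const[OF c]] by auto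
  show ?case
  proof (cases "K = N + 2")
    case True
    have "T c (Suc N) K = 0" using True by (simp add: pb_big)
    then show ?thesis using True Suc.prems by (simp add: T_Suc)
  next
    case False
    then have KN: "K \<le> N + 1" using Suc.prems by simp
    have ih: "T c (Suc N) K \<le> real (N + 2 - K) * c * T c N (K - 1)" using Suc.IH[OF Suc.prems(1) KN] .
    have low: "(1 - c) * T c N (K - 1) \<le> T c (Suc N) (K - 1)"
    proof (cases "K - 1 = 0")
      case True then show ?thesis using c by (simp)
    next
      case False
      then have "T c (Suc N) (K - 1) = c * T c N (K-1-1) + (1 - c) * T c N (K - 1)" by simp
      then show ?thesis using b[of N "K-1-1"] c by simp
    qed
    have r: "real (N + 3 - K) = real (N + 2 - K) + 1" using KN by auto
    have eq: "T c (Suc (Suc N)) K = c * T c (Suc N) (K - 1) + (1 - c) * T c (Suc N) K"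
      using Suc.prems by simp
    define A where "A = T c (Suc N) (K - 1)"
    define B where "B = T c (Suc N) K"
    define D where "D = T c N (K - 1)"
    define m where "m = real (N + 2 - K)"
    have m0: "0 \<le> m" unfolding m_def by simp
    have ih': "B \<le> m * c * D" using ih unfolding B_def m_def D_def .
    have low': "(1 - c) * D \<le> A" using low unfolding A_def D_def .
    have "(1 - c) * B \<le> (1 - c) * (m * c * D)"
      using ih' c by (intro mult_left_mono) auto
    also have "\<dots> = m * c * ((1 - c) * D)" by simp
    also have "\<dots> \<le> m * c * A"
      using low' c m0 by (intro mult_left_mono) auto
    finally have "(1 - c) * B \<le> m * c * A" .
    then have "T c (Suc (Suc N)) K \<le> (m + 1) * c * A" unfolding eq A_def[symmetric] B_def[symmetric]
      by (simp add: algebra_simps)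
    moreover have r': "real (Suc N + 2 - K) = m + 1" unfolding m_def using KN by auto
    ultimately show ?thesis unfolding A_def by (subst r')
  qed
qed

lemma T_S:
  assumes c: "0 \<le> c" "c \<le> 1"
  shows "1 \<le> K \<Longrightarrow> T c N K + T c N (K + 1) \<le> real (N + 1 - K) * c"
proof (induction N arbitrary: K)
  case 0 then show ?case by simp
next
  case (Suc N)
  have b: "\<And>N k. 0 \<le> T c N k" using pb_bounds[OF p01_const[OF c]] by auto
  show ?case
  proof (cases "K = 1")
    case True
    have i1: "T c N 1 + T c N 2 \<le> real N * c" using Suc.IH[of 1] by (simp add: numeral_2_eq_2)
    have "T c (Suc N) 1 + T c (Suc N) 2 = c * (1 + T c N 1) + (1 - c) * (T c N 1 + T c N 2)"
      by (simp add: algebra_simps numeral_2_eq_2)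
    also have "\<dots> \<le> c * (1 + real N * c) + (1 - c) * (real N * c)"
      using i1 b[of N 2] c by (intro add_mono mult_left_mono) auto
    also have "\<dots> \<le> real (Suc N + 1 - K) * c" using True c by (simp add: algebra_simps)
    finally show ?thesis using True by (simp only: True one_add_one)
  next
    case False
    then have K2: "2 \<le> K" using Suc.prems by simp
    have i1: "T c N (K-1) + T c N K \<le> real (N + 1 - (K - 1)) * c" using Suc.IH[of "K-1"] K2 by simp
    have i2: "T c N K + T c N (K+1) \<le> real (N + 1 - K) * c" using Suc.IH[of K] K2 by simp
    have "T c (Suc N) K + T c (Suc N) (K+1) = c * (T c N (K-1) + T c N K) + (1 - c) * (T c N K + T c N (K+1))"
      using K2 by (simp add: algebra_simps)
    also have "\<dots> \<le> c * (real (N + 1 - (K - 1)) * c) + (1 - c) * (real (N + 1 - K) * c)"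
      using i1 i2 c by (intro add_mono mult_left_mono) auto
    also have "\<dots> \<le> real (Suc N + 1 - K) * c"
    proof (cases "K \<le> N + 1")
      case True
      define m where "m = real (N + 1 - K)"
      have e: "real (N + 1 - (K - 1)) = m + 1" "real (Suc N + 1 - K) = m + 1"
        using True K2 by (auto simp: m_def)
      have cc: "c * c \<le> c" using c by (simp add: mult_left_le)
      have "c * ((m + 1) * c) + (1 - c) * (m * c) = m * c + c * c" by (simp add: algebra_simps)
      moreover have "(m + 1) * c = m * c + c" by (simp add: algebra_simps)
      ultimately show ?thesis unfolding e m_def[symmetric] using cc by linarith
    next
      case False
      then have "N + 1 - (K - 1) = 0" "N + 1 - K = 0" using K2 by auto
      then show ?thesis by simp
    qed
    finally show ?thesis .
  qed
qed

lemma T_W: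
  assumes c: "0 \<le> c" "c \<le> 1/2"
  shows "s \<le> M + 1 \<Longrightarrow> T c M s + T c M (M + 1 - s) \<le> 1"
proof (induction M arbitrary: s)
  case 0 then have "s = 0 \<or> s = 1" by auto
  then show ?case by auto
next
  case (Suc M)
  have p: "p01 (\<lambda>_. c) M" using c by (intro p01_const) auto
  show ?case
  proof (cases "s = 0 \<or> s = M + 2")
    case True then show ?thesis by (auto simp: pb_big)
  next
    case False
    then have s: "1 \<le> s" "s \<le> M + 1" using Suc.prems by auto
    have i1: "T c M (s-1) + T c M (M + 1 - (s-1)) \<le> 1" using Suc.IH[of "s-1"] s by simp
    have i2: "T c M s + T c M (M + 1 - s) \<le> 1" using Suc.IH[of s] s by simp
    have e1: "M + 1 - (s - 1) = Suc (M + 1 - s)" using s by auto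
    have e2: "Suc M + 1 - s = Suc (M + 1 - s)" using s by auto
    have mono: "T c M (Suc (M + 1 - s)) \<le> T c M (M + 1 - s)" by (rule pb_mono_k[OF p])
    have "T c (Suc M) s + T c (Suc M) (Suc M + 1 - s)
       = c * T c M (s-1) + (1 - c) * T c M s + (c * T c M (M + 1 - s) + (1 - c) * T c M (Suc (M + 1 - s)))"
      using s e2 by simp
    also have "\<dots> = c * (T c M (s-1) + T c M (Suc (M + 1 - s))) + (1 - c) * (T c M s + T c M (M + 1 - s))
        + (1 - 2 * c) * (T c M (Suc (M + 1 - s)) - T c M (M + 1 - s))"
      by (simp add: algebra_simps)
    also have "\<dots> \<le> c * 1 + (1 - c) * 1 + 0"
    proof (intro add_mono mult_left_mono)
      show "T c M (s - 1) + T c M (Suc (M + 1 - s)) \<le> 1" using i1 unfolding e1 .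
      show "(1 - 2 * c) * (T c M (Suc (M + 1 - s)) - T c M (M + 1 - s)) \<le> 0"
        using mono c by (intro mult_nonneg_nonpos) auto
    qed (use i2 c in auto)
    finally show ?thesis by simp
  qed
qed

lemma T_half:
  assumes c: "0 \<le> c" "c \<le> 1/2" and s: "M + 1 \<le> 2 * s"
  shows "T c M s \<le> 1/2"
proof (cases "s \<le> M + 1")
  case True
  have p: "p01 (\<lambda>_. c) M" using c by (intro p01_const) auto
  have "T c M s \<le> T c M (M + 1 - s)" using s by (intro pb_mono_k'[OF p]) auto
  then show ?thesis using T_W[OF c True] by simp
next
  case False then show ?thesis by (simp add: pb_big)
qed

lemma final_ineq_aux:
  assumes c: "0 \<le> c" "c \<le> 1/2" and pq: "q \<le> p" "p < r" and n: "N + p + q = n" "n + 2 \<le> 2 * r"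
  shows "T c N (r - p) + T c N (r - q) \<le> real (n + 1 - r) * c"
proof -
  have p: "p01 (\<lambda>_. c) N" using c by (intro p01_const) auto
  have c1: "c \<le> 1" using c by simp
  let ?K = "r - p"
  have K1: "1 \<le> ?K" using pq by simp
  have le: "real (N + 1 - ?K) * c \<le> real (n + 1 - r) * c"
    using c n pq by (intro mult_right_mono) auto
  have b: "0 \<le> T c N (r - p)" "0 \<le> T c N (r-q)" using pb_bounds[OF p] by auto
  show ?thesis
  proof (cases "q = p")
    case True
    show ?thesis
    proof (cases "N < ?K")
      case True
      then have "T c N (r - p) = 0" "T c N (r - q) = 0" using \<open>q = p\<close> by (auto simp: pb_big)
      then show ?thesis using c by simp
    next
      case False
      then obtain N1 where N1: "N = Suc N1" using K1 by (cases N) auto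
      have "T c N ?K \<le> real (N1 + 2 - ?K) * c * T c N1 (?K - 1)"
        unfolding N1 by (rule T_II[OF c(1) c1 K1]) (use False N1 in auto)
      also have "\<dots> \<le> real (N1 + 2 - ?K) * c * (1/2)"
        using T_half[OF c, of N1 "?K - 1"] c \<open>q = p\<close> n N1 pq
        by (intro mult_left_mono) auto
      finally have "2 * T c N ?K \<le> real (N + 1 - ?K) * c" using N1 by simp
      then show ?thesis using \<open>q = p\<close> le by simp
    qed
  next
    case False
    then have "r - p + 1 \<le> r - q" using pq by auto
    then have "T c N (r - q) \<le> T c N (r - p + 1)" by (intro pb_mono_k'[OF p])
    then have "T c N (r - p) + T c N (r - q) \<le> real (N + 1 - ?K) * c"
      using T_S[OF c(1) c1 K1, of N] by simp
    then show ?thesis using le by simp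
  qed
qed

lemma final_ineq:
  assumes c: "0 \<le> c" "c \<le> 1/2" and pq: "p < r" "q < r" and n: "N + p + q = n" "n + 2 \<le> 2 * r"
  shows "T c N (r - p) + T c N (r - q) \<le> real (n + 1 - r) * c"
proof (cases "q \<le> p")
  case True then show ?thesis using final_ineq_aux[OF c True pq(1) n] by simp
next
  case False then show ?thesis using final_ineq_aux[OF c _ pq(2), of p N n] n by (simp add: add.commute add.left_commute)
qed



definition posV :: "real \<Rightarrow> real \<Rightarrow> real \<Rightarrow> bool" where
  "posV c x y = ((x \<le> c \<and> y \<le> c) \<or> (c \<le> x \<and> y * (1 - c) \<le> c * (1 - x)))"

definition validc :: "real \<Rightarrow> nat set \<Rightarrow> nat set \<Rightarrow> nat \<Rightarrow> (nat \<Rightarrow> real) \<Rightarrow> (nat \<Rightarrow> real) \<Rightarrow> bool" where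
  "validc c Sp Sn n a b = (\<forall>i<n. 0 \<le> a i \<and> a i \<le> 1 \<and> 0 \<le> b i \<and> b i \<le> 1 \<and>
      (i \<in> Sp \<longrightarrow> posV c (a i) (b i)) \<and> (i \<in> Sn \<longrightarrow> posV c (b i) (a i)) \<and>
      (i \<notin> Sp \<and> i \<notin> Sn \<longrightarrow> a i \<le> c \<and> b i \<le> c))"

definition extr :: "real \<Rightarrow> nat set \<Rightarrow> nat set \<Rightarrow> (nat \<Rightarrow> real) \<Rightarrow> (nat \<Rightarrow> real) \<Rightarrow> nat \<Rightarrow> bool" where
  "extr c Sp Sn a b i = ((a i = c \<and> b i = c) \<or> (i \<in> Sp \<and> a i = 1 \<and> b i = 0) \<or> (i \<in> Sn \<and> a i = 0 \<and> b i = 1))"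

lemma key_ineq:
  assumes "0 \<le> X" "0 \<le> Y" "0 \<le> y" "x \<le> 1" "c < 1" "posV c x y"
  shows "x * X + y * Y \<le> X \<or> x * X + y * Y \<le> c * X + c * Y"
proof (cases "x \<le> c \<and> y \<le> c")
  case True
  then have "x * X \<le> c * X" "y * Y \<le> c * Y" using assms by (auto intro: mult_right_mono)
  then show ?thesis by simp
next
  case False
  then have h: "c \<le> x" "y * (1 - c) \<le> c * (1 - x)" using assms(6) by (auto simp: posV_def)
  define l where "l = (1 - x) / (1 - c)"
  have l0: "0 \<le> l" "l \<le> 1" using h assms unfolding l_def by (auto simp: field_simps)
  have lc: "l * (1 - c) = 1 - x" using assms(5) unfolding l_def by simp
  then have "l - l * c = 1 - x" by (simp add: algebra_simps)
  then have xl: "x = (1 - l) + l * c" by linarith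
  have yl: "y \<le> l * c" using h assms(5) unfolding l_def by (simp add: field_simps)
  have "x * X + y * Y \<le> ((1 - l) + l * c) * X + (l * c) * Y"
    using xl yl assms by (auto intro: mult_right_mono)
  also have "\<dots> = (1 - l) * X + l * (c * X + c * Y)" by (simp add: algebra_simps)
  finally have *: "x * X + y * Y \<le> (1 - l) * X + l * (c * X + c * Y)" .
  show ?thesis
  proof (rule ccontr)
    assume "\<not> ?thesis"
    then have a: "X < x * X + y * Y" "c * X + c * Y < x * X + y * Y" by auto
    have "(1 - l) * X \<le> (1 - l) * (x * X + y * Y)" using a l0 by (intro mult_left_mono) auto
    moreover have "l * (c * X + c * Y) \<le> l * (x * X + y * Y)" using a l0 by (intro mult_left_mono) auto
    ultimately have "(1 - l) * X + l * (c * X + c * Y) \<le> x * X + y * Y" by (simp add: algebra_simps)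
    moreover have "(1 - l) * X + l * (c * X + c * Y) < x * X + y * Y"
    proof (cases "l = 0")
      case True then show ?thesis using a by simp
    next
      case False
      then have "l * (c * X + c * Y) < l * (x * X + y * Y)" using a l0 by (intro mult_strict_left_mono) auto
      moreover have "(1 - l) * X \<le> (1 - l) * (x * X + y * Y)" using a l0 by (intro mult_left_mono) auto
      ultimately show ?thesis by (simp add: algebra_simps)
    qed
    then show False using * by linarith
  qed
qed

lemma affine_repr:
  assumes "p01 a n" "p01 b n" "i < n"
  shows "\<exists>G0 X Y. 0 \<le> X \<and> 0 \<le> Y \<and> (\<forall>x y. pb (a(i:=x)) n k + pb (b(i:=y)) n k' = G0 + x * X + y * Y)"
proof (intro exI conjI allI)
  let ?A0 = "pb (a(i:=0)) n k" and ?A1 = "pb (a(i:=1)) n k"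
  let ?B0 = "pb (b(i:=0)) n k'" and ?B1 = "pb (b(i:=1)) n k'"
  show "0 \<le> ?A1 - ?A0" using pb_mono_coord[OF assms(1,3)] by simp
  show "0 \<le> ?B1 - ?B0" using pb_mono_coord[OF assms(2,3)] by simp
  fix x y
  show "pb (a(i:=x)) n k + pb (b(i:=y)) n k' = (?A0 + ?B0) + x * (?A1 - ?A0) + y * (?B1 - ?B0)"
    using pb_affine[OF assms(3), of a x k] pb_affine[OF assms(3), of b y k'] by (simp add: algebra_simps)
qed

lemma validc_p01: "validc c Sp Sn n a b \<Longrightarrow> p01 a n \<and> p01 b n"
  by (auto simp: validc_def p01_def)

lemma step:
  assumes v: "validc c Sp Sn n a b" and d: "Sp \<inter> Sn = {}" and c: "0 < c" "c \<le> 1/2" and i: "i < n"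
  shows "\<exists>a1 b1. validc c Sp Sn n a1 b1 \<and> pb a n k + pb b n k' \<le> pb a1 n k + pb b1 n k'
     \<and> (\<forall>j. j \<noteq> i \<longrightarrow> a1 j = a j \<and> b1 j = b j) \<and> extr c Sp Sn a1 b1 i"
proof -
  obtain G0 X Y where XY: "0 \<le> X" "0 \<le> Y"
    and G: "\<And>x y. pb (a(i:=x)) n k + pb (b(i:=y)) n k' = G0 + x * X + y * Y"
    using affine_repr[OF _ _ i, of a b k k'] validc_p01[OF v] by blast
  have Gab: "pb a n k + pb b n k' = G0 + a i * X + b i * Y" using G[of "a i" "b i"] by simp
  have vi: "0 \<le> a i" "a i \<le> 1" "0 \<le> b i" "b i \<le> 1" using v i by (auto simp: validc_def)
  have cc: "validc c Sp Sn n (a(i:=c)) (b(i:=c))" using v c unfolding validc_def posV_def by auto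
  have ecc: "extr c Sp Sn (a(i:=c)) (b(i:=c)) i" by (simp add: extr_def)
  have Gcc: "pb (a(i:=c)) n k + pb (b(i:=c)) n k' = G0 + c * X + c * Y" by (rule G)
  have upd: "\<And>x y. \<forall>j. j \<noteq> i \<longrightarrow> (a(i:=x)) j = a j \<and> (b(i:=y)) j = b j" by simp
  consider "i \<in> Sp" | "i \<in> Sn" | "i \<notin> Sp \<and> i \<notin> Sn" by blast
  then show ?thesis
  proof cases
    case 1
    have pv: "posV c (a i) (b i)" using v i 1 by (auto simp: validc_def)
    have v10: "validc c Sp Sn n (a(i:=1)) (b(i:=0))" using v c 1 d unfolding validc_def posV_def by auto
    have e10: "extr c Sp Sn (a(i:=1)) (b(i:=0)) i" using 1 by (simp add: extr_def)
    have G10: "pb (a(i:=1)) n k + pb (b(i:=0)) n k' = G0 + 1 * X + 0 * Y" by (rule G)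
    from key_ineq[OF XY vi(3) vi(2) _ pv] c
    have "a i * X + b i * Y \<le> X \<or> a i * X + b i * Y \<le> c * X + c * Y" by simp
    then show ?thesis
    proof
      assume "a i * X + b i * Y \<le> X"
      then show ?thesis using v10 e10 G10 Gab upd by (intro exI[of _ "a(i:=1)"] exI[of _ "b(i:=0)"]) auto
    next
      assume "a i * X + b i * Y \<le> c * X + c * Y"
      then show ?thesis using cc ecc Gcc Gab upd by (intro exI[of _ "a(i:=c)"] exI[of _ "b(i:=c)"]) auto
    qed
  next
    case 2
    have pv: "posV c (b i) (a i)" using v i 2 by (auto simp: validc_def)
    have v01: "validc c Sp Sn n (a(i:=0)) (b(i:=1))" using v c 2 d unfolding validc_def posV_def by auto
    have e01: "extr c Sp Sn (a(i:=0)) (b(i:=1)) i" using 2 by (simp add: extr_def)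
    have G01: "pb (a(i:=0)) n k + pb (b(i:=1)) n k' = G0 + 0 * X + 1 * Y" by (rule G)
    from key_ineq[OF XY(2,1) vi(1) vi(4) _ pv] c
    have "b i * Y + a i * X \<le> Y \<or> b i * Y + a i * X \<le> c * Y + c * X" by simp
    then show ?thesis
    proof
      assume "b i * Y + a i * X \<le> Y"
      then show ?thesis using v01 e01 G01 Gab upd by (intro exI[of _ "a(i:=0)"] exI[of _ "b(i:=1)"]) auto
    next
      assume "b i * Y + a i * X \<le> c * Y + c * X"
      then show ?thesis using cc ecc Gcc Gab upd by (intro exI[of _ "a(i:=c)"] exI[of _ "b(i:=c)"]) auto
    qed
  next
    case 3
    have "a i \<le> c" "b i \<le> c" using v i 3 by (auto simp: validc_def)
    then have "a i * X + b i * Y \<le> c * X + c * Y" using XY by (intro add_mono mult_right_mono)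
    then show ?thesis using cc ecc Gcc Gab upd by (intro exI[of _ "a(i:=c)"] exI[of _ "b(i:=c)"]) auto
  qed
qed

lemma reduce:
  assumes d: "Sp \<inter> Sn = {}" and c: "0 < c" "c \<le> 1/2"
  shows "validc c Sp Sn n a b \<Longrightarrow> \<exists>a' b'. validc c Sp Sn n a' b' \<and> (\<forall>i<n. extr c Sp Sn a' b' i)
      \<and> pb a n k + pb b n k' \<le> pb a' n k + pb b' n k'"
proof (induction "card {i. i < n \<and> \<not> extr c Sp Sn a b i}" arbitrary: a b rule: less_induct)
  case less
  show ?case
  proof (cases "\<forall>i<n. extr c Sp Sn a b i")
    case True then show ?thesis using less.prems by blast
  next
    case False
    then obtain i where i: "i < n" "\<not> extr c Sp Sn a b i" by blast
    obtain a1 b1 where v1: "validc c Sp Sn n a1 b1" and le1: "pb a n k + pb b n k' \<le> pb a1 n k + pb b1 n k'"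
      and same: "\<forall>j. j \<noteq> i \<longrightarrow> a1 j = a j \<and> b1 j = b j" and e1: "extr c Sp Sn a1 b1 i"
      using step[OF less.prems d c i(1), of k k'] by blast
    have sub: "{j. j < n \<and> \<not> extr c Sp Sn a1 b1 j} \<subseteq> {j. j < n \<and> \<not> extr c Sp Sn a b j} - {i}"
    proof
      fix j assume "j \<in> {j. j < n \<and> \<not> extr c Sp Sn a1 b1 j}"
      then show "j \<in> {j. j < n \<and> \<not> extr c Sp Sn a b j} - {i}"
        using same e1 by (cases "j = i") (auto simp: extr_def)
    qed
    have "card {j. j < n \<and> \<not> extr c Sp Sn a1 b1 j} \<le> card ({j. j < n \<and> \<not> extr c Sp Sn a b j} - {i})"
      by (rule card_mono[OF _ sub]) auto
    also have "\<dots> < card {j. j < n \<and> \<not> extr c Sp Sn a b j}"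
      using i by (intro card_Diff1_less) auto
    finally obtain a' b' where "validc c Sp Sn n a' b'" "\<forall>i<n. extr c Sp Sn a' b' i"
      "pb a1 n k + pb b1 n k' \<le> pb a' n k + pb b' n k'"
      using less.hyps[OF _ v1] by blast
    then show ?thesis using le1 by (intro exI[of _ a'] exI[of _ b']) auto
  qed
qed

lemma comb_main:
  assumes c: "0 < c" "c \<le> 1/2" and v: "validc c Sp Sn n a b" and d: "Sp \<inter> Sn = {}"
    and f: "finite Sp" "finite Sn" and r: "card Sp < r" "card Sn < r" "n + 2 \<le> 2 * r"
  shows "pb a n r + pb b n r \<le> real (n + 1 - r) * c"
proof -
  obtain a' b' where v': "validc c Sp Sn n a' b'" and e: "\<forall>i<n. extr c Sp Sn a' b' i"
    and le: "pb a n r + pb b n r \<le> pb a' n r + pb b' n r"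
    using reduce[OF d c v, of r r] by blast
  have c01: "c \<noteq> 0" "c \<noteq> 1" using c by auto
  let ?C = "{i. i < n \<and> a' i = c}" and ?P = "{i. i < n \<and> a' i = 1}" and ?Q = "{i. i < n \<and> b' i = 1}"
  have Cb: "{i. i < n \<and> b' i = c} = ?C" using e c01 by (auto simp: extr_def)
  have ea: "\<forall>i<n. a' i = 0 \<or> a' i = 1 \<or> a' i = c" using e by (auto simp: extr_def)
  have eb: "\<forall>i<n. b' i = 0 \<or> b' i = 1 \<or> b' i = c" using e by (auto simp: extr_def)
  have pa: "pb a' n r = T c (card ?C) (r - card ?P)" using ext_eval[OF c01 ea] .
  have pbb: "pb b' n r = T c (card ?C) (r - card ?Q)" using ext_eval[OF c01 eb] Cb by simp
  have PSp: "?P \<subseteq> Sp" using e c01 by (auto simp: extr_def)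
  have QSn: "?Q \<subseteq> Sn" using e c01 by (auto simp: extr_def)
  have cP: "card ?P < r" using card_mono[OF f(1) PSp] r by simp
  have cQ: "card ?Q < r" using card_mono[OF f(2) QSn] r by simp
  have un: "{..<n} = ?C \<union> ?P \<union> ?Q" using e c01 by (auto simp: extr_def)
  have d1: "?C \<inter> ?P = {}" using c01 by auto
  have d2: "(?C \<union> ?P) \<inter> ?Q = {}" using e c01 by (auto simp: extr_def)
  have "card {..<n} = card (?C \<union> ?P) + card ?Q"
    unfolding un by (rule card_Un_disjoint[OF _ _ d2]) auto
  also have "card (?C \<union> ?P) = card ?C + card ?P"
    by (rule card_Un_disjoint[OF _ _ d1]) auto
  finally have "card {..<n} = card ?C + card ?P + card ?Q" .
  then have N: "card ?C + card ?P + card ?Q = n" by simp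
  have "T c (card ?C) (r - card ?P) + T c (card ?C) (r - card ?Q) \<le> real (n + 1 - r) * c"
    by (rule final_ineq[OF less_imp_le[OF c(1)] c(2) cP cQ N r(3)])
  then show ?thesis using le pa pbb by simp
qed



lemma card_Suc_upd:
  "card {i. i < Suc n \<and> (x(n:=y)) i \<in> U} = card {i. i < n \<and> x i \<in> U} + (if y \<in> U then 1 else 0)"
proof -
  have "{i. i < Suc n \<and> (x(n:=y)) i \<in> U} = (if y \<in> U then insert n {i. i < n \<and> x i \<in> U} else {i. i < n \<and> x i \<in> U})"
    by (auto simp: less_Suc_eq)
  then show ?thesis by auto
qed

lemma meas_count:
  fixes M :: "nat \<Rightarrow> 'a measure"
  assumes U: "\<And>i. U \<in> sets (M i)"
  shows "{T \<in> space (PiM {..<n} M). k \<le> card {i. i < n \<and> T i \<in> U}} \<in> sets (PiM {..<n} M)"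
proof -
  have e: "\<And>T. card {i. i < n \<and> T i \<in> U} = (\<Sum>i<n. indicator U (T i) :: nat)"
  proof -
    fix T :: "nat \<Rightarrow> 'a"
    have "card {i. i < n \<and> T i \<in> U} = card {i \<in> {..<n}. T i \<in> U}" by (rule arg_cong[where f=card]) auto
    also have "\<dots> = (\<Sum>i<n. indicator U (T i) :: nat)"
      by (simp add: sum.If_cases indicator_def Int_def)
    finally show "card {i. i < n \<and> T i \<in> U} = (\<Sum>i<n. indicator U (T i) :: nat)" .
  qed
  note [measurable] = U
  show ?thesis unfolding e by measurable
qed

lemma count_emeasure:
  fixes M :: "nat \<Rightarrow> 'a measure"
  assumes Pr: "\<And>i. prob_space (M i)" and U: "\<And>i. U \<in> sets (M i)"
  shows "emeasure (PiM {..<n} M) {T \<in> space (PiM {..<n} M). k \<le> card {i. i < n \<and> T i \<in> U}}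
     = ennreal (pb (\<lambda>i. measure (M i) U) n k)"
proof (induction n arbitrary: k)
  case 0
  interpret PS: prob_space "PiM {..<0::nat} M" by (rule prob_space_PiM) (rule Pr)
  show ?case
  proof (cases "k = 0")
    case True
    then show ?thesis using PS.emeasure_space_1 by simp
  next
    case False
    then show ?thesis by simp
  qed
next
  case (Suc n)
  interpret product_prob_space M by (rule product_prob_spaceI) (rule Pr)
  let ?a = "\<lambda>i. measure (M i) U"
  let ?E = "\<lambda>m k. {T \<in> space (PiM {..<m} M). k \<le> card {i. i < m \<and> T i \<in> U}}"
  let ?k = "\<lambda>y. if y \<in> U then k - 1 else k"
  have ins: "{..<Suc n} = insert n {..<n}" by auto
  have Em: "\<And>m k. ?E m k \<in> sets (PiM {..<m} M)" by (rule meas_count[OF U])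
  have pa: "p01 ?a n" by (auto simp: p01_def intro: prob_space.measure_le_1[OF Pr])
  have pbnn: "\<And>j. 0 \<le> pb ?a n j" using pb_bounds[OF pa] by auto
  have "emeasure (PiM {..<Suc n} M) (?E (Suc n) k) = (\<integral>\<^sup>+T. indicator (?E (Suc n) k) T \<partial>PiM {..<Suc n} M)"
    by (rule nn_integral_indicator[symmetric]) (rule Em)
  also have "\<dots> = (\<integral>\<^sup>+y. (\<integral>\<^sup>+x. indicator (?E (Suc n) k) (x(n:=y)) \<partial>PiM {..<n} M) \<partial>M n)"
  proof -
    have meas: "indicator (?E (Suc n) k) \<in> borel_measurable (PiM {..<Suc n} M)"
      using Em[of "Suc n" k] by (rule borel_measurable_indicator)
    show ?thesis unfolding ins
      by (rule product_nn_integral_insert_rev) (simp, simp, use meas in \<open>simp only: ins\<close>)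
  qed
  also have "\<dots> = (\<integral>\<^sup>+y. (\<integral>\<^sup>+x. indicator (?E n (?k y)) x \<partial>PiM {..<n} M) \<partial>M n)"
  proof (intro nn_integral_cong)
    fix y x assume y: "y \<in> space (M n)" and x: "x \<in> space (PiM {..<n} M)"
    have xs: "x(n:=y) \<in> space (PiM {..<Suc n} M)"
      using x y unfolding space_PiM ins by (intro PiE_fun_upd) auto
    have "(k \<le> card {i. i < Suc n \<and> (x(n:=y)) i \<in> U}) = (?k y \<le> card {i. i < n \<and> x i \<in> U})"
      unfolding card_Suc_upd by auto
    then show "indicator (?E (Suc n) k) (x(n:=y)) = (indicator (?E n (?k y)) x :: ennreal)"
      using xs x by (simp add: indicator_def)
  qed
  also have "\<dots> = (\<integral>\<^sup>+y. ennreal (pb ?a n (?k y)) \<partial>M n)"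
    by (intro nn_integral_cong) (subst nn_integral_indicator[OF Em], rule Suc.IH)
  also have "\<dots> = (\<integral>\<^sup>+y. ennreal (pb ?a n (k-1)) * indicator U y + ennreal (pb ?a n k) * indicator (space (M n) - U) y \<partial>M n)"
    by (intro nn_integral_cong) (auto simp: indicator_def)
  also have "\<dots> = ennreal (pb ?a n (k-1)) * emeasure (M n) U + ennreal (pb ?a n k) * emeasure (M n) (space (M n) - U)"
    using U[of n] by (subst nn_integral_add) (auto simp: nn_integral_cmult_indicator)
  also have "\<dots> = ennreal (?a n * pb ?a n (k-1) + (1 - ?a n) * pb ?a n k)"
    using U[of n] pbnn prob_space.prob_compl[OF Pr[of n] U[of n]] finite_measure.emeasure_eq_measure[OF prob_space.finite_measure[OF Pr[of n]]]
    by (simp add: ennreal_mult'[symmetric] ennreal_plus[symmetric] prob_space.prob_le_1[OF Pr[of n]] mult.commute del: ennreal_plus)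
  also have "\<dots> = ennreal (pb ?a (Suc n) k)"
    by (cases "k = 0") (auto simp: algebra_simps)
  finally show ?case .
qed



abbreviation Nd :: "real \<Rightarrow> real measure" where
  "Nd t \<equiv> density lborel (normal_density t 1)"

lemma Nd_prob: "prob_space (Nd t)" by (rule prob_space_normal_density) simp

lemma Nd_sets[simp]: "sets (Nd t) = sets borel" by simp

lemma Nd_space[simp]: "space (Nd t) = UNIV" by simp

lemma nd_factor: "normal_density t 1 x = normal_density 0 1 x * exp (t * x - t^2 / 2)"
proof -
  have e: "exp (- ((x - t)\<^sup>2) / 2) = exp (- ((x - 0)\<^sup>2) / 2) * exp (t * x - t\<^sup>2 / 2)"
    by (subst exp_add[symmetric]) (rule arg_cong[where f=exp], simp add: power2_eq_square field_simps)
  show ?thesis unfolding normal_density_def using e by simp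
qed

lemma Nd_emeasure: "A \<in> sets borel \<Longrightarrow> emeasure (Nd t) A = (\<integral>\<^sup>+x. ennreal (normal_density t 1 x) * indicator A x \<partial>lborel)"
  by (subst emeasure_density) auto

lemma Nd_eq: "emeasure (Nd t) A = ennreal (measure (Nd t) A)"
  using finite_measure.emeasure_eq_measure[OF prob_space.finite_measure[OF Nd_prob]] .

lemma dens_le:
  assumes A: "A \<in> sets borel" and K: "0 \<le> K" and b: "\<And>x. x \<in> A \<Longrightarrow> exp (t * x - t^2 / 2) \<le> K"
  shows "measure (Nd t) A \<le> K * measure (Nd 0) A"
proof -
  have "emeasure (Nd t) A \<le> (\<integral>\<^sup>+x. ennreal K * (ennreal (normal_density 0 1 x) * indicator A x) \<partial>lborel)"
    unfolding Nd_emeasure[OF A]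
  proof (intro nn_integral_mono)
    fix x
    show "ennreal (normal_density t 1 x) * indicator A x \<le> ennreal K * (ennreal (normal_density 0 1 x) * indicator A x)"
    proof (cases "x \<in> A")
      case True
      have "normal_density 0 1 x * exp (t * x - t^2 / 2) \<le> normal_density 0 1 x * K"
        by (rule mult_left_mono[OF b[OF True]]) simp
      then have "normal_density t 1 x \<le> K * normal_density 0 1 x"
        using nd_factor[of t x] by (simp add: mult.commute)
      then show ?thesis using True K by (simp add: ennreal_mult'[symmetric])
    qed simp
  qed
  also have "\<dots> = ennreal K * emeasure (Nd 0) A"
  proof -
    note A[measurable]
    have m: "(\<lambda>x. ennreal (normal_density 0 1 x) * indicator A x) \<in> borel_measurable lborel" by measurable
    show ?thesis by (simp only: nn_integral_cmult[OF m] Nd_emeasure[OF A])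
  qed
  finally have "ennreal (measure (Nd t) A) \<le> ennreal (K * measure (Nd 0) A)"
    unfolding Nd_eq using K by (simp add: ennreal_mult)
  then show ?thesis using K by (subst (asm) ennreal_le_iff) auto
qed

lemma dens_ge:
  assumes A: "A \<in> sets borel" and K: "0 \<le> K" and b: "\<And>x. x \<in> A \<Longrightarrow> K \<le> exp (t * x - t^2 / 2)"
  shows "K * measure (Nd 0) A \<le> measure (Nd t) A"
proof -
  have "ennreal K * emeasure (Nd 0) A = (\<integral>\<^sup>+x. ennreal K * (ennreal (normal_density 0 1 x) * indicator A x) \<partial>lborel)"
  proof -
    note A[measurable]
    have m: "(\<lambda>x. ennreal (normal_density 0 1 x) * indicator A x) \<in> borel_measurable lborel" by measurable
    show ?thesis by (simp only: nn_integral_cmult[OF m] Nd_emeasure[OF A])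
  qed
  also have "\<dots> \<le> emeasure (Nd t) A"
    unfolding Nd_emeasure[OF A]
  proof (intro nn_integral_mono)
    fix x
    show "ennreal K * (ennreal (normal_density 0 1 x) * indicator A x) \<le> ennreal (normal_density t 1 x) * indicator A x"
    proof (cases "x \<in> A")
      case True
      have "normal_density 0 1 x * K \<le> normal_density 0 1 x * exp (t * x - t^2 / 2)"
        by (rule mult_left_mono[OF b[OF True]]) simp
      then have "K * normal_density 0 1 x \<le> normal_density t 1 x"
        using nd_factor[of t x] by (simp add: mult.commute)
      then show ?thesis using True K by (simp add: ennreal_mult'[symmetric])
    qed simp
  qed
  finally have "ennreal (K * measure (Nd 0) A) \<le> ennreal (measure (Nd t) A)"
    unfolding Nd_eq using K by (simp add: ennreal_mult)
  then show ?thesis by (subst (asm) ennreal_le_iff) auto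
qed

lemma mlr:
  assumes A: "A \<in> sets borel" and B: "B \<in> sets borel"
    and ord: "(0 \<le> t \<and> (\<forall>x\<in>A. \<forall>y\<in>B. x \<le> y)) \<or> (t \<le> 0 \<and> (\<forall>x\<in>A. \<forall>y\<in>B. y \<le> x))"
  shows "measure (Nd t) A * measure (Nd 0) B \<le> measure (Nd 0) A * measure (Nd t) B"
proof (cases "A = {} \<or> B = {}")
  case True then show ?thesis by auto
next
  case False
  then have An: "A \<noteq> {}" and Bn: "B \<noteq> {}" by auto
  obtain s where s1: "\<And>x. x \<in> A \<Longrightarrow> t * x \<le> t * s" and s2: "\<And>y. y \<in> B \<Longrightarrow> t * s \<le> t * y"
  proof (cases "0 \<le> t \<and> (\<forall>x\<in>A. \<forall>y\<in>B. x \<le> y)")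
    case True
    then have t: "0 \<le> t" and o: "\<forall>x\<in>A. \<forall>y\<in>B. x \<le> y" by auto
    from Bn obtain y0 where y0: "y0 \<in> B" by auto
    have bdd: "bdd_above A" using o y0 unfolding bdd_above_def by blast
    show ?thesis
    proof (rule that[of "Sup A"])
      fix x assume "x \<in> A" then show "t * x \<le> t * Sup A" using bdd t by (intro mult_left_mono cSup_upper) auto
    next
      fix y assume "y \<in> B" then show "t * Sup A \<le> t * y" using An o t by (intro mult_left_mono cSup_least) auto
    qed
  next
    case False
    then have t: "t \<le> 0" and o: "\<forall>x\<in>A. \<forall>y\<in>B. y \<le> x" using ord by auto
    from Bn obtain y0 where y0: "y0 \<in> B" by auto
    have bdd: "bdd_below A" using o y0 unfolding bdd_below_def by blast
    show ?thesis
    proof (rule that[of "Inf A"])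
      fix x assume "x \<in> A" then show "t * x \<le> t * Inf A" using bdd t by (intro mult_left_mono_neg cInf_lower) auto
    next
      fix y assume "y \<in> B" then show "t * Inf A \<le> t * y" using An o t by (intro mult_left_mono_neg cInf_greatest) auto
    qed
  qed
  define K where "K = exp (t * s - t^2 / 2)"
  have K0: "0 \<le> K" unfolding K_def by simp
  have mA: "measure (Nd t) A \<le> K * measure (Nd 0) A"
    by (rule dens_le[OF A K0]) (use s1 in \<open>auto simp: K_def\<close>)
  have mB: "K * measure (Nd 0) B \<le> measure (Nd t) B"
    by (rule dens_ge[OF B K0]) (use s2 in \<open>auto simp: K_def\<close>)
  have "measure (Nd t) A * measure (Nd 0) B \<le> (K * measure (Nd 0) A) * measure (Nd 0) B"
    using mA by (intro mult_right_mono) auto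
  also have "\<dots> = measure (Nd 0) A * (K * measure (Nd 0) B)" by simp
  also have "\<dots> \<le> measure (Nd 0) A * measure (Nd t) B"
    using mB by (intro mult_left_mono) auto
  finally show ?thesis .
qed



lemma RD: "real_distribution (Nd 0)"
  unfolding real_distribution_def real_distribution_axioms_def using Nd_prob by simp

lemma Phi_cdf: "Phi = cdf (Nd 0)"
  by (rule ext) (simp add: Phi_def cdf_def)

lemma Nd0_atom: "measure (Nd 0) {x} = 0"
proof -
  have ae: "AE y in lborel. y \<in> {x} \<longrightarrow> ennreal (normal_density 0 1 y) = 0"
    using AE_lborel_singleton[of x] by (rule eventually_mono) simp
  have "{x} \<in> null_sets (Nd 0)"
    by (subst null_sets_density_iff) (use ae in auto)
  then have "emeasure (Nd 0) {x} = 0" by (rule null_setsD1)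
  then show ?thesis unfolding measure_def by simp
qed

lemma Phi_cont: "continuous_on UNIV Phi"
  unfolding Phi_cdf
  by (intro continuous_at_imp_continuous_on ballI) (simp add: finite_borel_measure.isCont_cdf[OF real_distribution.finite_borel_measure_M[OF RD]] Nd0_atom)

lemma Phi_mono: "x \<le> y \<Longrightarrow> Phi x \<le> Phi y"
  unfolding Phi_cdf by (rule finite_borel_measure.cdf_nondecreasing[OF real_distribution.finite_borel_measure_M[OF RD]])

lemma Phi_top: "(Phi \<longlongrightarrow> 1) at_top"
  unfolding Phi_cdf by (rule real_distribution.cdf_lim_at_top_prob[OF RD])

lemma Phi_bot: "(Phi \<longlongrightarrow> 0) at_bot"
  unfolding Phi_cdf by (rule finite_borel_measure.cdf_lim_at_bot[OF real_distribution.finite_borel_measure_M[OF RD]])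

lemma L_facts:
  assumes c: "0 < c" "c < 1/2"
  shows "{t. Phi t \<le> c} \<in> sets borel" "measure (Nd 0) {t. Phi t \<le> c} \<le> c"
    "\<And>x y. x \<in> {t. Phi t \<le> c} \<Longrightarrow> y \<notin> {t. Phi t \<le> c} \<Longrightarrow> x \<le> y"
proof -
  let ?L = "{t. Phi t \<le> c}"
  have cl: "closed ?L" by (rule closed_Collect_le[OF Phi_cont continuous_on_const])
  then show "?L \<in> sets borel" by (rule borel_closed)
  show "\<And>x y. x \<in> ?L \<Longrightarrow> y \<notin> ?L \<Longrightarrow> x \<le> y"
    using Phi_mono by (metis mem_Collect_eq nle_le order.trans)
  show "measure (Nd 0) ?L \<le> c"
  proof (cases "?L = {}")
    case True then show ?thesis using c by simp
  next
    case False
    have bdd: "bdd_above ?L"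
    proof (rule ccontr)
      assume nb: "\<not> bdd_above ?L"
      have "\<forall>t. Phi t \<le> c"
      proof
        fix t
        from nb obtain s where "s \<in> ?L" "t < s" unfolding bdd_above_def by (meson not_le)
        then show "Phi t \<le> c" using Phi_mono[of t s] by auto
      qed
      then have "1 \<le> c" using tendsto_upperbound[OF Phi_top] by (simp add: always_eventually)
      then show False using c by simp
    qed
    have z: "Sup ?L \<in> ?L" by (rule closed_contains_Sup[OF False bdd cl])
    have sub: "?L \<subseteq> {..Sup ?L}" using bdd by (auto intro: cSup_upper)
    have "measure (Nd 0) ?L \<le> measure (Nd 0) {..Sup ?L}"
      by (rule finite_measure.finite_measure_mono[OF prob_space.finite_measure[OF Nd_prob] sub]) simp
    also have "\<dots> = Phi (Sup ?L)" by (simp add: Phi_def)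
    also have "\<dots> \<le> c" using z by simp
    finally show ?thesis .
  qed
qed

lemma U_facts:
  assumes c: "0 < c" "c < 1/2"
  shows "{t. 1 - Phi t \<le> c} \<in> sets borel" "measure (Nd 0) {t. 1 - Phi t \<le> c} \<le> c"
    "\<And>x y. x \<in> {t. 1 - Phi t \<le> c} \<Longrightarrow> y \<notin> {t. 1 - Phi t \<le> c} \<Longrightarrow> y \<le> x"
proof -
  let ?U = "{t. 1 - Phi t \<le> c}"
  have cl: "closed ?U" by (rule closed_Collect_le[OF continuous_on_diff[OF continuous_on_const Phi_cont] continuous_on_const])
  then show "?U \<in> sets borel" by (rule borel_closed)
  show "\<And>x y. x \<in> ?U \<Longrightarrow> y \<notin> ?U \<Longrightarrow> y \<le> x"
  proof -
    fix x y assume "x \<in> ?U" "y \<notin> ?U"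
    then show "y \<le> x" using Phi_mono[of x y] by (cases "y \<le> x") auto
  qed
  show "measure (Nd 0) ?U \<le> c"
  proof (cases "?U = {}")
    case True then show ?thesis using c by simp
  next
    case False
    have bdd: "bdd_below ?U"
    proof (rule ccontr)
      assume nb: "\<not> bdd_below ?U"
      have "\<forall>t. 1 - c \<le> Phi t"
      proof
        fix t
        from nb obtain s where "s \<in> ?U" "s < t" unfolding bdd_below_def by (meson not_le)
        then show "1 - c \<le> Phi t" using Phi_mono[of s t] by auto
      qed
      then have "\<forall>\<^sub>F t in at_bot. 1 - c \<le> Phi t" by (simp add: always_eventually)
      then have "1 - c \<le> 0" by (rule tendsto_lowerbound[OF Phi_bot]) simp
      then show False using c by simp
    qed
    define z where "z = Inf ?U"
    have z: "z \<in> ?U" unfolding z_def by (rule closed_contains_Inf[OF False bdd cl])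
    have sub: "?U \<subseteq> {z..}" using bdd unfolding z_def by (auto intro: cInf_lower)
    interpret P0: prob_space "Nd 0" by (rule Nd_prob)
    have "measure (Nd 0) ?U \<le> measure (Nd 0) {z..}"
      by (rule P0.finite_measure_mono[OF sub]) simp
    also have "measure (Nd 0) {z..} = 1 - measure (Nd 0) {..<z}"
    proof -
      have "UNIV - {z..} = {..<z}" by auto
      then show ?thesis using P0.prob_compl[of "{z..}"] by simp
    qed
    also have "measure (Nd 0) {..<z} = Phi z"
    proof -
      have "{..z} = {..<z} \<union> {z}" by auto
      moreover have "measure (Nd 0) ({..<z} \<union> {z}) = measure (Nd 0) {..<z} + measure (Nd 0) {z}"
        by (rule P0.finite_measure_Union) auto
      ultimately have "measure (Nd 0) {..z} = measure (Nd 0) {..<z} + measure (Nd 0) {z}" by simp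
      then show ?thesis by (simp add: Phi_def Nd0_atom)
    qed
    also have "1 - Phi z \<le> c" using z by simp
    finally show ?thesis by simp
  qed
qed



lemma posV_from:
  assumes "0 \<le> b" "a \<le> 1" "b \<le> cl" "cl \<le> c" "cu \<le> c" "b * (1 - cu) \<le> cl * (1 - a)"
  shows "posV c a b"
proof (cases "a \<le> c")
  case True then show ?thesis using assms by (simp add: posV_def)
next
  case False
  have "b * (1 - c) \<le> b * (1 - cu)" using assms by (intro mult_left_mono) auto
  also have "\<dots> \<le> cl * (1 - a)" by fact
  also have "\<dots> \<le> c * (1 - a)" using assms by (intro mult_right_mono) auto
  finally show ?thesis using False by (simp add: posV_def)
qed

lemma Nd_compl: "A \<in> sets borel \<Longrightarrow> measure (Nd s) (UNIV - A) = 1 - measure (Nd s) A"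
  using prob_space.prob_compl[OF Nd_prob, of A s] by simp

lemma Nd_split: "A \<in> sets borel \<Longrightarrow> B \<in> sets borel \<Longrightarrow> A \<inter> B = {} \<Longrightarrow>
   measure (Nd s) (UNIV - A) = measure (Nd s) B + measure (Nd s) (UNIV - A - B)"
proof -
  assume A: "A \<in> sets borel" and B: "B \<in> sets borel" and d: "A \<inter> B = {}"
  have e: "UNIV - A = B \<union> (UNIV - A - B)" using d by auto
  have "measure (Nd s) (B \<union> (UNIV - A - B)) = measure (Nd s) B + measure (Nd s) (UNIV - A - B)"
    using A B by (intro finite_measure.finite_measure_Union[OF prob_space.finite_measure[OF Nd_prob]]) auto
  then show ?thesis using e by simp
qed

lemma coord:
  assumes UB: "U \<in> sets borel" and LB: "L \<in> sets borel" and disj: "U \<inter> L = {}"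
    and cU: "measure (Nd 0) U \<le> c" and cL: "measure (Nd 0) L \<le> c"
    and oU: "\<And>x y. x \<in> U \<Longrightarrow> y \<notin> U \<Longrightarrow> y \<le> x" and oL: "\<And>x y. x \<in> L \<Longrightarrow> y \<notin> L \<Longrightarrow> x \<le> y"
  shows "0 < t \<Longrightarrow> posV c (measure (Nd t) U) (measure (Nd t) L)"
    and "t < 0 \<Longrightarrow> posV c (measure (Nd t) L) (measure (Nd t) U)"
proof -
  let ?a = "measure (Nd t) U" and ?b = "measure (Nd t) L"
  let ?cu = "measure (Nd 0) U" and ?cl = "measure (Nd 0) L"
  let ?Mid = "UNIV - U - L"
  have MB: "?Mid \<in> sets borel" using UB LB by auto
  have ab: "0 \<le> ?a" "?a \<le> 1" "0 \<le> ?b" "?b \<le> 1"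
    using prob_space.prob_le_1[OF Nd_prob] by auto
  have sU: "\<And>s. measure (Nd s) (UNIV - U) = measure (Nd s) L + measure (Nd s) ?Mid"
    by (rule Nd_split[OF UB LB disj])
  have sL: "\<And>s. measure (Nd s) (UNIV - L) = measure (Nd s) U + measure (Nd s) ?Mid"
    using Nd_split[OF LB UB] disj by (simp add: Int_commute Diff_eq Int_ac)
  show "0 < t \<Longrightarrow> posV c ?a ?b"
  proof -
    assume t: "0 < t"
    have i1: "?b * measure (Nd 0) (UNIV - L) \<le> ?cl * measure (Nd t) (UNIV - L)"
      by (rule mlr[OF LB]) (use LB t oL in auto)
    then have "?b * (1 - ?cl) \<le> ?cl * (1 - ?b)" unfolding Nd_compl[OF LB] .
    then have bl: "?b \<le> ?cl" by (simp add: algebra_simps)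
    have i2: "?b * measure (Nd 0) ?Mid \<le> ?cl * measure (Nd t) ?Mid"
      by (rule mlr[OF LB MB]) (use t oL in auto)
    have e1: "1 - ?cu = ?cl + measure (Nd 0) ?Mid" using sU[of 0] Nd_compl[OF UB, of 0] by simp
    have e2: "1 - ?a = ?b + measure (Nd t) ?Mid" using sU[of t] Nd_compl[OF UB, of t] by simp
    have "?b * (1 - ?cu) \<le> ?cl * (1 - ?a)"
      unfolding e1 e2 using i2 by (simp add: algebra_simps)
    then show ?thesis by (intro posV_from[OF ab(3) ab(2) bl cL cU])
  qed
  show "t < 0 \<Longrightarrow> posV c ?b ?a"
  proof -
    assume t: "t < 0"
    have i1: "?a * measure (Nd 0) (UNIV - U) \<le> ?cu * measure (Nd t) (UNIV - U)"
      by (rule mlr[OF UB]) (use UB t oU in auto)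
    then have "?a * (1 - ?cu) \<le> ?cu * (1 - ?a)" unfolding Nd_compl[OF UB] .
    then have au: "?a \<le> ?cu" by (simp add: algebra_simps)
    have i2: "?a * measure (Nd 0) ?Mid \<le> ?cu * measure (Nd t) ?Mid"
      by (rule mlr[OF UB MB]) (use t oU in auto)
    have e1: "1 - ?cl = ?cu + measure (Nd 0) ?Mid" using sL[of 0] Nd_compl[OF LB, of 0] by simp
    have e2: "1 - ?b = ?a + measure (Nd t) ?Mid" using sL[of t] Nd_compl[OF LB, of t] by simp
    have "?a * (1 - ?cl) \<le> ?cu * (1 - ?b)"
      unfolding e1 e2 using i2 by (simp add: algebra_simps)
    then show ?thesis by (intro posV_from[OF ab(1) ab(4) au cU cL])
  qed
qed

lemma ord_stat_le:
  assumes r: "1 \<le> r" "r \<le> n" and le: "ord_stat n f r \<le> c"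
  shows "r \<le> card {i. i < n \<and> f i \<le> c}"
proof -
  define xs where "xs = sort (map f [0..<n])"
  have len: "length xs = n" unfolding xs_def by simp
  have so: "sorted xs" unfolding xs_def by simp
  have xr: "xs ! (r - 1) \<le> c" using le unfolding ord_stat_def xs_def .
  have sub: "{..<r} \<subseteq> {j. j < length xs \<and> xs ! j \<le> c}"
  proof
    fix j assume "j \<in> {..<r}"
    then have j: "j \<le> r - 1" "r - 1 < length xs" using r len by auto
    then have "xs ! j \<le> xs ! (r - 1)" using so by (intro sorted_nth_mono) auto
    then show "j \<in> {j. j < length xs \<and> xs ! j \<le> c}" using j xr by auto
  qed
  have "r \<le> card {j. j < length xs \<and> xs ! j \<le> c}"
    using card_mono[OF _ sub] by simp
  also have "\<dots> = length (filter (\<lambda>x. x \<le> c) xs)" by (rule length_filter_conv_card[symmetric])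
  also have "\<dots> = length (filter (\<lambda>x. x \<le> c) (map f [0..<n]))"
    unfolding xs_def by (simp add: filter_sort)
  also have "\<dots> = card {j. j < n \<and> f j \<le> c}"
    by (subst length_filter_conv_card) (rule arg_cong[where f=card], auto)
  finally show ?thesis .
qed



theorem theorem1:
  fixes n r :: nat and \<theta> :: "nat \<Rightarrow> real" and \<alpha> :: real
  assumes "n \<ge> 1"
    and "real n + 1 < 2 * real r" and "r \<le> n"
    and "0 < \<alpha>" and "\<alpha> < 1/2"
    and "card {i \<in> {..<n}. \<theta> i > 0} < r"
    and "card {i \<in> {..<n}. \<theta> i < 0} < r"
  shows "measure (T_law n \<theta>)
           {T \<in> space (T_law n \<theta>). min (p_plus n r T) (p_minus n r T) \<le> \<alpha>} \<le> \<alpha>"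
proof -
  note nr = assms(2,3) and al = assms(4,5) and cp = assms(6) and cn = assms(7)
  define m where "m = n - r + 1"
  have m1: "1 \<le> m" unfolding m_def by simp
  have r1: "1 \<le> r" using nr by simp
  have n2r: "n + 2 \<le> 2 * r" using nr(1) by linarith
  define c where "c = \<alpha> / real m"
  have c0: "0 < c" unfolding c_def using al m1 by simp
  have cle: "c \<le> \<alpha>" unfolding c_def using al m1 by (simp add: divide_le_eq)
  have c12: "c < 1/2" using cle al by simp
  have mc: "real m * c = \<alpha>" unfolding c_def using m1 by simp
  define U where "U = {t. 1 - Phi t \<le> c}"
  define L where "L = {t. Phi t \<le> c}"
  have UB: "U \<in> sets borel" unfolding U_def by (rule U_facts(1)[OF c0 c12])
  have cU: "measure (Nd 0) U \<le> c" unfolding U_def by (rule U_facts(2)[OF c0 c12])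
  have oU: "\<And>x y. x \<in> U \<Longrightarrow> y \<notin> U \<Longrightarrow> y \<le> x" unfolding U_def by (rule U_facts(3)[OF c0 c12])
  have LB: "L \<in> sets borel" unfolding L_def by (rule L_facts(1)[OF c0 c12])
  have cL: "measure (Nd 0) L \<le> c" unfolding L_def by (rule L_facts(2)[OF c0 c12])
  have oL: "\<And>x y. x \<in> L \<Longrightarrow> y \<notin> L \<Longrightarrow> x \<le> y" unfolding L_def by (rule L_facts(3)[OF c0 c12])
  have disj: "U \<inter> L = {}" using c12 by (auto simp: U_def L_def)
  define M where "M = (\<lambda>i. Nd (\<theta> i))"
  have TL: "T_law n \<theta> = PiM {..<n} M" unfolding T_law_def M_def ..
  have Pr: "\<And>i. prob_space (M i)" unfolding M_def by (rule Nd_prob)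
  have UM: "\<And>i. U \<in> sets (M i)" unfolding M_def using UB by simp
  have LM: "\<And>i. L \<in> sets (M i)" unfolding M_def using LB by simp
  define EU where "EU = {T \<in> space (PiM {..<n} M). r \<le> card {i. i < n \<and> T i \<in> U}}"
  define EL where "EL = {T \<in> space (PiM {..<n} M). r \<le> card {i. i < n \<and> T i \<in> L}}"
  have EUs: "EU \<in> sets (PiM {..<n} M)" unfolding EU_def by (rule meas_count[OF UM])
  have ELs: "EL \<in> sets (PiM {..<n} M)" unfolding EL_def by (rule meas_count[OF LM])
  have sub: "{T \<in> space (PiM {..<n} M). min (p_plus n r T) (p_minus n r T) \<le> \<alpha>} \<subseteq> EU \<union> EL"
  proof
    fix T assume "T \<in> {T \<in> space (PiM {..<n} M). min (p_plus n r T) (p_minus n r T) \<le> \<alpha>}"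
    then have Ts: "T \<in> space (PiM {..<n} M)" and or: "p_plus n r T \<le> \<alpha> \<or> p_minus n r T \<le> \<alpha>"
      by (auto simp: min_le_iff_disj)
    have mpos: "0 < real m" using m1 by simp
    from or show "T \<in> EU \<union> EL"
    proof
      assume h: "p_plus n r T \<le> \<alpha>"
      have "p_plus n r T = real m * ord_stat n (pval T) r" unfolding p_plus_def m_def ..
      then have "real m * ord_stat n (pval T) r \<le> real m * c"
        using h mc by simp
      then have "ord_stat n (pval T) r \<le> c" using mpos by (rule mult_left_le_imp_le)
      then have "r \<le> card {i. i < n \<and> pval T i \<le> c}" by (rule ord_stat_le[OF r1 nr(2)])
      moreover have "{i. i < n \<and> pval T i \<le> c} = {i. i < n \<and> T i \<in> U}"
        by (auto simp: pval_def U_def)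
      ultimately show ?thesis using Ts by (simp add: EU_def)
    next
      assume h: "p_minus n r T \<le> \<alpha>"
      have "p_minus n r T = real m * ord_stat n (qval T) r" unfolding p_minus_def m_def ..
      then have "real m * ord_stat n (qval T) r \<le> real m * c"
        using h mc by simp
      then have "ord_stat n (qval T) r \<le> c" using mpos by (rule mult_left_le_imp_le)
      then have "r \<le> card {i. i < n \<and> qval T i \<le> c}" by (rule ord_stat_le[OF r1 nr(2)])
      moreover have "{i. i < n \<and> qval T i \<le> c} = {i. i < n \<and> T i \<in> L}"
        by (auto simp: qval_def L_def)
      ultimately show ?thesis using Ts by (simp add: EL_def)
    qed
  qed
  interpret PS: prob_space "PiM {..<n} M" by (rule prob_space_PiM) (rule Pr)
  define a where "a = (\<lambda>i. measure (M i) U)"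
  define b where "b = (\<lambda>i. measure (M i) L)"
  have pa: "p01 a n" unfolding a_def p01_def using prob_space.prob_le_1[OF Pr] by auto
  have pbb: "p01 b n" unfolding b_def p01_def using prob_space.prob_le_1[OF Pr] by auto
  have mEU: "measure (PiM {..<n} M) EU = pb a n r"
    using count_emeasure[OF Pr UM, where n=n and k=r] pb_bounds[OF pa, of r]
    unfolding EU_def a_def measure_def by simp
  have mEL: "measure (PiM {..<n} M) EL = pb b n r"
    using count_emeasure[OF Pr LM, where n=n and k=r] pb_bounds[OF pbb, of r]
    unfolding EL_def b_def measure_def by simp
  define Sp where "Sp = {i \<in> {..<n}. \<theta> i > 0}"
  define Sn where "Sn = {i \<in> {..<n}. \<theta> i < 0}"
  have v: "validc c Sp Sn n a b"
    unfolding validc_def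
  proof (intro allI impI conjI)
    fix i assume i: "i < n"
    show "0 \<le> a i" "0 \<le> b i" unfolding a_def b_def by auto
    show "a i \<le> 1" "b i \<le> 1" unfolding a_def b_def using prob_space.prob_le_1[OF Pr] by auto
    show "i \<in> Sp \<Longrightarrow> posV c (a i) (b i)"
      unfolding a_def b_def M_def Sp_def by (rule coord(1)[OF UB LB disj cU cL oU oL]) auto
    show "i \<in> Sn \<Longrightarrow> posV c (b i) (a i)"
      unfolding a_def b_def M_def Sn_def by (rule coord(2)[OF UB LB disj cU cL oU oL]) auto
    assume "i \<notin> Sp \<and> i \<notin> Sn"
    then have "\<theta> i = 0" using i unfolding Sp_def Sn_def by auto
    then show "a i \<le> c" "b i \<le> c" unfolding a_def b_def M_def using cU cL by auto
  qed
  have dS: "Sp \<inter> Sn = {}" unfolding Sp_def Sn_def by auto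
  have fS: "finite Sp" "finite Sn" unfolding Sp_def Sn_def by auto
  have comb: "pb a n r + pb b n r \<le> real (n + 1 - r) * c"
    by (rule comb_main[OF c0 _ v dS fS]) (use c12 cp cn n2r in \<open>auto simp: Sp_def Sn_def\<close>)
  have "measure (T_law n \<theta>) {T \<in> space (T_law n \<theta>). min (p_plus n r T) (p_minus n r T) \<le> \<alpha>}
      \<le> measure (PiM {..<n} M) (EU \<union> EL)"
    unfolding TL by (rule PS.finite_measure_mono[OF sub]) (use EUs ELs in auto)
  also have "\<dots> \<le> measure (PiM {..<n} M) EU + measure (PiM {..<n} M) EL"
    using EUs ELs by (intro measure_subadditive) (auto simp: PS.emeasure_finite)
  also have "\<dots> \<le> real (n + 1 - r) * c" using comb mEU mEL by simp
  also have "\<dots> = \<alpha>" using mc unfolding m_def by (simp add: Suc_diff_le nr(2))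
  finally show ?thesis .
qed


end
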